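(* Let $\ell:\mathbb{R}\to\mathbb{R}$ be non-decreasing, convex and non-negative, differentiable on $[-\ell(0)/2,\infty)$ with $\ell'(z)>0$ for $z\ge-\ell(0)/2$. Let $d=\sup\{z\in\mathbb{R}:\partial\ell(z)=\{0\}\}$, and $d=-\infty$ if there is no such $z$; assume $-\ell(0)/2>d$. For $\rho\ge-\ell(0)/2$ and $z\ge0$ define $\xi(z,\rho)=\frac{\ell(\rho+z)+\ell(\rho-z)-2\ell(\rho)}{z\ell'(\rho)}$ for $z>0$ and $\xi(0,\rho)=0$. Suppose there is a function $\bar\xi:[0,\infty)\to\mathbb{R}$ that is continuous and strictly increasing with $\bar\xi(0)=0$ and $\lim_{z\to\infty}\bar\xi(z)>1$, such that $\sup_{\rho\ge-\ell(0)/2}\xi(z,\rho)\le\bar\xi(z)$ for all $z\ge0$. Let $\psi(\theta,\rho)=\ell(\rho)-\inf_{z\in\mathbb{R}}\{\frac{1+\theta}{2}\ell(\rho-z)+\frac{1-\theta}{2}\ell(\rho+z)\}$. Then there exist $\varepsilon>0$ and a function $\widetilde\psi$ on $[0,\varepsilon]$ such that $\widetilde\psi(0)=0$, $\widetilde\psi(\theta)>0$ for $0<\theta\le\varepsilon$, $\widetilde\psi$ is continuous and strictly increasing on $[0,\varepsilon]$, and $\widetilde\psi(\theta)\le\inf_{\rho\ge-\ell(0)/2}\psi(\theta,\rho)$ for $0\le\theta\le\varepsilon$.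
   Context: $\partial\ell(z)$ denotes the subdifferential of the convex function $\ell$ at $z$. *)

theory Defs
  imports "HOL-Analysis.Analysis"
begin

definition subdiff :: "(real \<Rightarrow> real) \<Rightarrow> real \<Rightarrow> real set" where
  "subdiff l z = {g. \<forall>y. l y \<ge> l z + g * (y - z)}"

text \<open>d = sup{z. subdiff l z = {0}}, with d = -infinity if the set is empty (ereal Sup of empty set).\<close>
definition dval :: "(real \<Rightarrow> real) \<Rightarrow> ereal" where
  "dval l = Sup (ereal ` {z. subdiff l z = {0}})"

definition xi :: "(real \<Rightarrow> real) \<Rightarrow> real \<Rightarrow> real \<Rightarrow> real" where
  "xi l z \<rho> = (if z = 0 then 0
     else (l (\<rho> + z) + l (\<rho> - z) - 2 * l \<rho>) / (z * deriv l \<rho>))"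

definition psi :: "(real \<Rightarrow> real) \<Rightarrow> real \<Rightarrow> real \<Rightarrow> ereal" where
  "psi l \<theta> \<rho> = ereal (l \<rho>) -
     (INF z\<in>(UNIV::real set). ereal ((1 + \<theta>) / 2 * l (\<rho> - z) + (1 - \<theta>) / 2 * l (\<rho> + z)))"

end

theory Submission
  imports Defs
begin

lemma tangent_ineq:
  fixes l :: "real \<Rightarrow> real"
  assumes cvx: "convex_on UNIV l" and d: "l differentiable (at r)"
  shows "l y \<ge> l r + deriv l r * (y - r)"
proof -
  have "(l has_field_derivative deriv l r) (at r within UNIV)"
    using d by (simp add: DERIV_deriv_iff_real_differentiable)
  from convex_on_imp_above_tangent[OF cvx _ _ _ this, of y] show ?thesis by simp
qed

theorem lemma7:
  fixes l :: "real \<Rightarrow> real" and xibar :: "real \<Rightarrow> real"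
  assumes mono: "mono l"
    and cvx: "convex_on UNIV l"
    and nonneg: "\<forall>z. l z \<ge> 0"
    and diff: "\<forall>z \<ge> - l 0 / 2. l differentiable (at z)"
    and dpos: "\<forall>z \<ge> - l 0 / 2. deriv l z > 0"
    and d_lt: "dval l < ereal (- l 0 / 2)"
    and xibar_cont: "continuous_on {0..} xibar"
    and xibar_mono: "strict_mono_on {0..} xibar"
    and xibar0: "xibar 0 = 0"
    and xibar_lim: "\<exists>L. ((\<lambda>z. ereal (xibar z)) \<longlongrightarrow> L) at_top \<and> L > 1"
    and xi_bound: "\<forall>z \<ge> 0. (SUP \<rho>\<in>{- l 0 / 2..}. ereal (xi l z \<rho>)) \<le> ereal (xibar z)"
  shows "\<exists>\<epsilon> > 0. \<exists>psit :: real \<Rightarrow> real.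
           psit 0 = 0 \<and>
           (\<forall>\<theta>. 0 < \<theta> \<and> \<theta> \<le> \<epsilon> \<longrightarrow> psit \<theta> > 0) \<and>
           continuous_on {0..\<epsilon>} psit \<and>
           strict_mono_on {0..\<epsilon>} psit \<and>
           (\<forall>\<theta>. 0 \<le> \<theta> \<and> \<theta> \<le> \<epsilon> \<longrightarrow>
              ereal (psit \<theta>) \<le> (INF \<rho>\<in>{- l 0 / 2..}. psi l \<theta> \<rho>))"
proof -
  define a where "a = - l 0 / 2"
  define c where "c = deriv l a"
  define E where "E = xibar 1"
  have cpos: "c > 0" using dpos by (simp add: c_def a_def)
  have Epos: "E > 0" using xibar_mono xibar0 unfolding E_def
    by (metis atLeast_iff less_numeral_extra(1) order_refl zero_le_one strict_mono_onD)
  have smono: "\<And>x y. 0 \<le> x \<Longrightarrow> x < y \<Longrightarrow> xibar x < xibar y"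
    using xibar_mono by (simp add: strict_mono_on_def)
  have inj: "\<And>x y. 0 \<le> x \<Longrightarrow> 0 \<le> y \<Longrightarrow> xibar x = xibar y \<Longrightarrow> x = y"
    by (metis linorder_neq_iff smono order_less_irrefl)
  have cont1: "continuous_on {0..1} xibar"
    using xibar_cont by (rule continuous_on_subset) auto
  have "\<forall>y\<in>{0..E}. \<exists>x. 0 \<le> x \<and> x \<le> 1 \<and> xibar x = y"
    using IVT'[OF _ _ _ cont1] xibar0 unfolding E_def by auto
  then obtain h where h: "\<And>y. y \<in> {0..E} \<Longrightarrow> 0 \<le> h y \<and> h y \<le> 1 \<and> xibar (h y) = y"
    by metis
  have hx: "\<And>x. x \<in> {0..1} \<Longrightarrow> h (xibar x) = x"
  proof -
    fix x :: real assume x: "x \<in> {0..1}"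
    have "xibar x \<in> {0..E}" using x xibar0 smono unfolding E_def
      by (metis atLeastAtMost_iff order_le_less order_refl)
    with h have "xibar (h (xibar x)) = xibar x" "0 \<le> h (xibar x)" by auto
    thus "h (xibar x) = x" using inj x by auto
  qed
  have img: "xibar ` {0..1} = {0..E}"
  proof
    show "xibar ` {0..1} \<subseteq> {0..E}" using xibar0 smono unfolding E_def
      by (auto, metis order_le_less order_refl, metis order_le_less)
    show "{0..E} \<subseteq> xibar ` {0..1}"
      using h by (metis atLeastAtMost_iff image_eqI subsetI)
  qed
  have hcont: "continuous_on {0..E} h"
    using continuous_on_inv[OF cont1 compact_Icc] hx img by auto
  have h0: "h 0 = 0" using hx[of 0] xibar0 by simp
  have hpos: "\<And>y. y \<in> {0<..E} \<Longrightarrow> h y > 0"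
    by (metis atLeastAtMost_iff greaterThanAtMost_iff h h0 less_eq_real_def order_less_irrefl xibar0)
  have hmono: "\<And>y1 y2. 0 \<le> y1 \<Longrightarrow> y1 < y2 \<Longrightarrow> y2 \<le> E \<Longrightarrow> h y1 < h y2"
  proof -
    fix y1 y2 :: real assume "0 \<le> y1" "y1 < y2" "y2 \<le> E"
    then have a1: "0 \<le> h y1" "xibar (h y1) = y1" "0 \<le> h y2" "xibar (h y2) = y2" using h by auto
    show "h y1 < h y2"
    proof (rule ccontr)
      assume "\<not> h y1 < h y2"
      then have "h y2 \<le> h y1" by simp
      then have "xibar (h y2) \<le> xibar (h y1)" using smono a1 by (metis order_le_less)
      thus False using a1 \<open>y1 < y2\<close> by simp
    qed
  qed
  define psit where "psit \<theta> = c * \<theta> * h (\<theta> / 2) / 4" for \<theta>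
  have key: "ereal (psit \<theta>) \<le> psi l \<theta> \<rho>" if th: "0 \<le> \<theta>" "\<theta> \<le> E" and r: "\<rho> \<ge> a" for \<theta> \<rho>
  proof -
    define z where "z = h (\<theta> / 2)"
    have z: "0 \<le> z" "xibar z = \<theta> / 2" using h[of "\<theta>/2"] th by (auto simp: z_def)
    define V where "V = (1 + \<theta>) / 2 * l (\<rho> - z) + (1 - \<theta>) / 2 * l (\<rho> + z)"
    have dr: "l differentiable (at \<rho>)" using diff r a_def by auto
    have da: "l differentiable (at a)" using diff a_def by auto
    have cle: "c \<le> deriv l \<rho>"
    proof (cases "\<rho> = a")
      case False
      have "l \<rho> \<ge> l a + deriv l a * (\<rho> - a)" by (rule tangent_ineq[OF cvx da])
      moreover have "l a \<ge> l \<rho> + deriv l \<rho> * (a - \<rho>)" by (rule tangent_ineq[OF cvx dr])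
      ultimately have "(deriv l a - deriv l \<rho>) * (\<rho> - a) \<le> 0" by (simp add: algebra_simps)
      moreover have "\<rho> - a > 0" using False r by simp
      ultimately show ?thesis unfolding c_def by (simp add: mult_le_0_iff)
    qed (simp add: c_def)
    have dposr: "deriv l \<rho> > 0" using cpos cle by simp
    have t1: "l (\<rho> + z) \<ge> l \<rho> + deriv l \<rho> * z" using tangent_ineq[OF cvx dr, of "\<rho> + z"] by simp
    have t2: "l (\<rho> - z) \<le> l \<rho>" using mono z(1) by (simp add: monoD)
    have S: "l (\<rho> + z) + l (\<rho> - z) - 2 * l \<rho> \<le> z * deriv l \<rho> * (\<theta> / 2)"
    proof (cases "z = 0")
      case True thus ?thesis by simp
    next
      case False
      have "ereal (xi l z \<rho>) \<le> (SUP \<rho>\<in>{- l 0 / 2..}. ereal (xi l z \<rho>))"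
        using r a_def by (intro SUP_upper) auto
      also have "\<dots> \<le> ereal (xibar z)" using xi_bound z by auto
      finally have "xi l z \<rho> \<le> \<theta> / 2" using z by simp
      moreover have "z * deriv l \<rho> > 0" using False z dposr by simp
      ultimately show ?thesis using False unfolding xi_def by (simp add: divide_le_eq mult.commute)
    qed
    have "l \<rho> - V = \<theta> / 2 * (l (\<rho> + z) - l (\<rho> - z)) - (l (\<rho> + z) + l (\<rho> - z) - 2 * l \<rho>) / 2"
      by (simp add: V_def field_simps)
    moreover have "\<theta> / 2 * (l (\<rho> + z) - l (\<rho> - z)) \<ge> \<theta> / 2 * (deriv l \<rho> * z)"
      using t1 t2 th by (intro mult_left_mono) auto
    ultimately have "l \<rho> - V \<ge> \<theta> * z * deriv l \<rho> / 4" using S by (simp add: field_simps)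
    moreover have "\<theta> * z * deriv l \<rho> / 4 \<ge> psit \<theta>"
    proof -
      have "c * z \<le> z * deriv l \<rho>" using mult_right_mono[OF cle z(1)] by (simp add: mult.commute)
      then have "\<theta> * (c * z) \<le> \<theta> * (z * deriv l \<rho>)" using th by (intro mult_left_mono) auto
      thus ?thesis unfolding psit_def z_def[symmetric] by (simp add: mult.commute mult.left_commute)
    qed
    ultimately have A: "psit \<theta> \<le> l \<rho> - V" by linarith
    have "(INF z\<in>(UNIV::real set). ereal ((1 + \<theta>) / 2 * l (\<rho> - z) + (1 - \<theta>) / 2 * l (\<rho> + z))) \<le> ereal V"
      unfolding V_def by (rule INF_lower) simp
    then have "ereal (l \<rho>) - ereal V \<le> psi l \<theta> \<rho>"
      unfolding psi_def by (rule ereal_minus_mono[OF order_refl])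
    moreover have "ereal (psit \<theta>) \<le> ereal (l \<rho> - V)" using A by simp
    moreover have "ereal (l \<rho>) - ereal V = ereal (l \<rho> - V)" by simp
    ultimately show ?thesis by (metis order_trans)
  qed
  show ?thesis
  proof (intro exI[of _ E] conjI Epos exI[of _ psit] allI impI)
    show "psit 0 = 0" by (simp add: psit_def)
    fix \<theta> :: real assume "0 < \<theta> \<and> \<theta> \<le> E"
    then have "h (\<theta>/2) > 0" using hpos by auto
    then show "psit \<theta> > 0" using cpos \<open>0 < \<theta> \<and> \<theta> \<le> E\<close> by (simp add: psit_def)
  next
    have "continuous_on {0..E} (\<lambda>\<theta>. h (\<theta> / 2))"
      by (rule continuous_on_compose2[OF hcont]) (auto intro!: continuous_intros simp: Epos)
    then show "continuous_on {0..E} psit" unfolding psit_def by (intro continuous_intros) auto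
  next
    show "strict_mono_on {0..E} psit"
    proof (rule strict_mono_onI)
      fix x y :: real assume xy: "x \<in> {0..E}" "y \<in> {0..E}" "x < y"
      have hl: "h (x/2) < h (y/2)" using hmono[of "x/2" "y/2"] xy by auto
      have h1: "0 \<le> h (x/2)" using h[of "x/2"] xy by auto
      have "x * h (x/2) \<le> x * h (y/2)" using hl xy by (intro mult_left_mono) auto
      also have "\<dots> < y * h (y/2)" using hl h1 xy by (intro mult_strict_right_mono) auto
      finally show "psit x < psit y" using cpos unfolding psit_def by (simp add: mult.assoc)
    qed
  next
    fix \<theta> :: real assume "0 \<le> \<theta> \<and> \<theta> \<le> E"
    then show "ereal (psit \<theta>) \<le> (INF \<rho>\<in>{- l 0 / 2..}. psi l \<theta> \<rho>)"
      using key unfolding a_def by (auto intro!: INF_greatest)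
  qed
qed

end
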